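(* Let $g,m,\ell$ be integers greater than $1$ with $g$ and $m$ odd, $\ell$ even, $m>\ell$, $\gcd(g+1,\ell)=2$ and $\gcd(m,\ell)=1$. Let $n=mg$ and $k=1+\ell g$, and let $A$ be a cyclically $k$-diagonal $n\times n$ array. Then there exists a solution to $P(A)$.
   Context: Arrays are partially filled and toroidal; $F(A)$ is the set of filled cells. $s_R(i,j)=(i,j+t)$, $s_C(i,j)=(i+t,j)$ with $t\ge1$ minimal such that the cell is filled. For $R,C\in\{-1,1\}^n$, $CN_{RC}(i,j)=s_C^{c_{j'}}(i,j')$ where $(i,j')=s_R^{r_i}(i,j)$. A solution to $P(A)$ is a pair $R,C$ such that $CN_{RC}$ is a permutation of $F(A)$ forming a single cycle of length $|F(A)|$. An $n\times n$ array is cyclically $k$-diagonal if its filled cells are exactly the $(i,j)$ with $i-j\bmod n\in\{0,\dots,k-1\}$. *)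

theory Defs
  imports Main
begin

text \<open>An n x n toroidal partially filled array is represented by its set of filled
  cells F, a subset of {0..<n} x {0..<n} (integer coordinates, taken mod n).
  A direction d is 1 or -1.\<close>

definition sR :: "int \<Rightarrow> (int \<times> int) set \<Rightarrow> int \<Rightarrow> int \<times> int \<Rightarrow> int \<times> int" where
  "sR n F d c = (let (i, j) = c;
      t = (LEAST t::nat. t \<ge> 1 \<and> (i, (j + d * int t) mod n) \<in> F)
    in (i, (j + d * int t) mod n))"

definition sC :: "int \<Rightarrow> (int \<times> int) set \<Rightarrow> int \<Rightarrow> int \<times> int \<Rightarrow> int \<times> int" where
  "sC n F d c = (let (i, j) = c;
      t = (LEAST t::nat. t \<ge> 1 \<and> ((i + d * int t) mod n, j) \<in> F)
    in ((i + d * int t) mod n, j))"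

definition CN :: "int \<Rightarrow> (int \<times> int) set \<Rightarrow> (int \<Rightarrow> int) \<Rightarrow> (int \<Rightarrow> int) \<Rightarrow> int \<times> int \<Rightarrow> int \<times> int" where
  "CN n F R C c = (let (i, j') = sR n F (R (fst c)) c in sC n F (C j') (i, j'))"

definition sign_vector :: "int \<Rightarrow> (int \<Rightarrow> int) \<Rightarrow> bool" where
  "sign_vector n V \<longleftrightarrow> (\<forall>i\<in>{0..<n}. V i \<in> {-1, 1})"

definition single_cycle_on :: "('a \<Rightarrow> 'a) \<Rightarrow> 'a set \<Rightarrow> bool" where
  "single_cycle_on f F \<longleftrightarrow> bij_betw f F F \<and> (\<forall>x\<in>F. \<forall>y\<in>F. \<exists>k. (f ^^ k) x = y)"

definition is_solution :: "int \<Rightarrow> (int \<times> int) set \<Rightarrow> (int \<Rightarrow> int) \<Rightarrow> (int \<Rightarrow> int) \<Rightarrow> bool" where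
  "is_solution n F R C \<longleftrightarrow> sign_vector n R \<and> sign_vector n C \<and> single_cycle_on (CN n F R C) F"

definition cyclically_k_diagonal :: "int \<Rightarrow> int \<Rightarrow> (int \<times> int) set \<Rightarrow> bool" where
  "cyclically_k_diagonal n k F \<longleftrightarrow>
     F = {(i, j). 0 \<le> i \<and> i < n \<and> 0 \<le> j \<and> j < n \<and> (i - j) mod n \<in> {0..<k}}"

end

theory Submission
  imports Defs
begin

lemma least_down:
  fixes n k dd :: int
  assumes "0 \<le> dd" "dd < k" "1 \<le> k" "k < n"
  shows "(LEAST t::nat. t \<ge> 1 \<and> (dd - int t) mod n < k) = (if dd \<ge> 1 then 1 else nat (n - k + 1))"
proof (cases "dd \<ge> 1")
  case True
  have "(dd - int 1) mod n < k" using True assms by simp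
  then show ?thesis using True by (intro Least_equality) auto
next
  case False
  then have dd0: "dd = 0" using assms by simp
  have P: "(dd - int (nat (n - k + 1))) mod n < k"
  proof -
    have "(dd - int (nat (n - k + 1))) = (k - 1) - n" using dd0 assms by simp
    then have "(dd - int (nat (n - k + 1))) mod n = (k - 1) mod n"
      by (simp add: minus_mod_self2)
    also have "\<dots> = k - 1" using assms by (intro mod_pos_pos_trivial) auto
    finally have "(dd - int (nat (n - k + 1))) mod n = k - 1" .
    then show ?thesis by simp
  qed
  have M: "nat (n - k + 1) \<le> t" if "t \<ge> 1" "(dd - int t) mod n < k" for t
  proof (rule ccontr)
    assume "\<not> nat (n - k + 1) \<le> t"
    then have "int t \<le> n - k" by simp
    have "(dd - int t) = (n - int t) - n" using dd0 by simp
    then have "(dd - int t) mod n = (n - int t) mod n" by (simp add: minus_mod_self2)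
    also have "\<dots> = n - int t" using that(1) assms \<open>int t \<le> n - k\<close> by (intro mod_pos_pos_trivial) auto
    finally have "(dd - int t) mod n = n - int t" .
    then show False using that \<open>int t \<le> n - k\<close> by simp
  qed
  show ?thesis using False P M assms by (intro Least_equality) auto
qed

lemma least_up:
  fixes n k dd :: int
  assumes "0 \<le> dd" "dd < k" "1 \<le> k" "k < n"
  shows "(LEAST t::nat. t \<ge> 1 \<and> (dd + int t) mod n < k) = (if dd + 1 < k then 1 else nat (n - k + 1))"
proof (cases "dd + 1 < k")
  case True
  have "(dd + int 1) mod n < k" using True assms by simp
  then show ?thesis using True by (intro Least_equality) auto
next
  case False
  then have dd0: "dd = k - 1" using assms by simp
  have P: "(dd + int (nat (n - k + 1))) mod n < k"
  proof -
    have "(dd + int (nat (n - k + 1))) = n" using dd0 assms by simp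
    then have "(dd + int (nat (n - k + 1))) mod n = 0" by simp
    then show ?thesis using assms by simp
  qed
  have M: "nat (n - k + 1) \<le> t" if "t \<ge> 1" "(dd + int t) mod n < k" for t
  proof (rule ccontr)
    assume "\<not> nat (n - k + 1) \<le> t"
    then have "int t \<le> n - k" by simp
    then have "(dd + int t) mod n = dd + int t" using dd0 that(1) assms
      by (intro mod_pos_pos_trivial) auto
    then show False using that \<open>int t \<le> n - k\<close> dd0 by simp
  qed
  show ?thesis using False P M assms by (intro Least_equality) auto
qed

definition diagF :: "int \<Rightarrow> int \<Rightarrow> (int \<times> int) set" where
  "diagF n k = {(i, j). 0 \<le> i \<and> i < n \<and> 0 \<le> j \<and> j < n \<and> (i - j) mod n \<in> {0..<k}}"

lemma memF_row:
  assumes "0 \<le> i" "i < n" "1 \<le> k"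
  shows "((i, x mod n) \<in> diagF n k) \<longleftrightarrow> (i - x) mod n < k"
proof -
  have n: "n > 0" using assms by simp
  have "(i - x mod n) mod n = (i - x) mod n" by (simp add: mod_diff_right_eq)
  then show ?thesis using assms n by (auto simp: diagF_def)
qed

lemma memF_col:
  assumes "0 \<le> j" "j < n" "1 \<le> k"
  shows "((x mod n, j) \<in> diagF n k) \<longleftrightarrow> (x - j) mod n < k"
proof -
  have n: "n > 0" using assms by simp
  have "(x mod n - j) mod n = (x - j) mod n" by (simp add: mod_diff_left_eq)
  then show ?thesis using assms n by (auto simp: diagF_def)
qed

lemma sR_plus:
  assumes "0 \<le> i" "i < n" "0 \<le> j" "j < n" "1 \<le> k" "k < n" "(i - j) mod n < k"
  shows "sR n (diagF n k) 1 (i, j) = (i, (j + (if (i - j) mod n \<ge> 1 then 1 else n - k + 1)) mod n)"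
proof -
  define dd where "dd = (i - j) mod n"
  have P: "(\<lambda>t::nat. t \<ge> 1 \<and> (i, (j + 1 * int t) mod n) \<in> diagF n k) = (\<lambda>t. t \<ge> 1 \<and> (dd - int t) mod n < k)"
  proof (rule ext)
    fix t :: nat
    have "(i - (j + 1 * int t)) mod n = (dd - int t) mod n"
      unfolding dd_def by (simp add: mod_simps algebra_simps)
    then show "(t \<ge> 1 \<and> (i, (j + 1 * int t) mod n) \<in> diagF n k) = (t \<ge> 1 \<and> (dd - int t) mod n < k)"
      using memF_row[OF assms(1,2,5)] by simp
  qed
  have d0: "0 \<le> dd" "dd < k" using assms unfolding dd_def by auto
  show ?thesis unfolding sR_def sC_def prod.case Let_def P using least_down[OF d0 assms(5,6)] assms
    by (simp add: dd_def)
qed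

lemma sR_minus:
  assumes "0 \<le> i" "i < n" "0 \<le> j" "j < n" "1 \<le> k" "k < n" "(i - j) mod n < k"
  shows "sR n (diagF n k) (-1) (i, j) = (i, (j - (if (i - j) mod n + 1 < k then 1 else n - k + 1)) mod n)"
proof -
  define dd where "dd = (i - j) mod n"
  have P: "(\<lambda>t::nat. t \<ge> 1 \<and> (i, (j + - 1 * int t) mod n) \<in> diagF n k) = (\<lambda>t. t \<ge> 1 \<and> (dd + int t) mod n < k)"
  proof (rule ext)
    fix t :: nat
    have "(i - (j + - 1 * int t)) mod n = (dd + int t) mod n"
      unfolding dd_def by (simp add: mod_simps algebra_simps)
    then show "(t \<ge> 1 \<and> (i, (j + - 1 * int t) mod n) \<in> diagF n k) = (t \<ge> 1 \<and> (dd + int t) mod n < k)"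
      using memF_row[OF assms(1,2,5)] by simp
  qed
  have d0: "0 \<le> dd" "dd < k" using assms unfolding dd_def by auto
  show ?thesis unfolding sR_def sC_def prod.case Let_def P using least_up[OF d0 assms(5,6)] assms
    by (simp add: dd_def)
qed

lemma sC_plus:
  assumes "0 \<le> i" "i < n" "0 \<le> j" "j < n" "1 \<le> k" "k < n" "(i - j) mod n < k"
  shows "sC n (diagF n k) 1 (i, j) = ((i + (if (i - j) mod n + 1 < k then 1 else n - k + 1)) mod n, j)"
proof -
  define dd where "dd = (i - j) mod n"
  have P: "(\<lambda>t::nat. t \<ge> 1 \<and> ((i + 1 * int t) mod n, j) \<in> diagF n k) = (\<lambda>t. t \<ge> 1 \<and> (dd + int t) mod n < k)"
  proof (rule ext)
    fix t :: nat
    have "(i + 1 * int t - j) mod n = (dd + int t) mod n"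
      unfolding dd_def by (simp add: mod_simps algebra_simps)
    then show "(t \<ge> 1 \<and> ((i + 1 * int t) mod n, j) \<in> diagF n k) = (t \<ge> 1 \<and> (dd + int t) mod n < k)"
      using memF_col[OF assms(3,4,5)] by simp
  qed
  have d0: "0 \<le> dd" "dd < k" using assms unfolding dd_def by auto
  show ?thesis unfolding sR_def sC_def prod.case Let_def P using least_up[OF d0 assms(5,6)] assms
    by (simp add: dd_def)
qed

definition celld :: "int \<Rightarrow> int \<Rightarrow> int \<Rightarrow> int \<times> int" where
  "celld n i d = (i, (i - d) mod n)"

lemma diff_cell_mod:
  fixes i d n :: int
  assumes "0 \<le> d" "d < n"
  shows "(i - (i - d) mod n) mod n = d"
proof -
  have "(i - (i - d) mod n) mod n = (i - (i - d)) mod n" by (rule mod_diff_right_eq)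
  then show ?thesis using assms by simp
qed

lemma CN_plus:
  assumes "3 \<le> k" "k < n" "0 \<le> i" "i < n" "0 \<le> d" "d < k" "R i = 1" "\<And>j. C j = 1"
  shows "CN n (diagF n k) R C (celld n i d) =
         celld n (if d \<ge> 1 then (i + 1) mod n else (i + n - k + 1) mod n) d"
proof -
  define j where "j = (i - d) mod n"
  have j: "0 \<le> j" "j < n" using assms unfolding j_def by auto
  have dij: "(i - j) mod n = d" unfolding j_def using assms by (intro diff_cell_mod) auto
  define s where "s = (if d \<ge> 1 then 1 else n - k + 1)"
  define j' where "j' = (j + s) mod n"
  have sr: "sR n (diagF n k) 1 (i, j) = (i, j')"
    using sR_plus[OF assms(3,4) j _ assms(2)] assms dij unfolding j'_def s_def by simp
  have j': "0 \<le> j'" "j' < n" using assms unfolding j'_def by auto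
  have d': "(i - j') mod n = (if d \<ge> 1 then d - 1 else k - 1)"
  proof -
    have "(i - j') mod n = (i - j - s) mod n" unfolding j'_def by (simp add: mod_simps algebra_simps)
    also have "\<dots> = ((i - j) mod n - s) mod n" by (simp add: mod_simps)
    also have "\<dots> = (d - s) mod n" using dij by simp
    also have "\<dots> = (if d \<ge> 1 then d - 1 else k - 1)"
    proof (cases "d \<ge> 1")
      case True then show ?thesis using assms unfolding s_def by simp
    next
      case False
      then have "d - s = (k - 1) - n" using assms unfolding s_def by simp
      then have "(d - s) mod n = (k - 1) mod n" by (simp add: minus_mod_self2)
      then show ?thesis using False assms by simp
    qed
    finally show ?thesis .
  qed
  have sc: "sC n (diagF n k) 1 (i, j') = ((i + 1) mod n, j')" if "d \<ge> 1"
    using sC_plus[OF assms(3,4) j' _ assms(2)] assms d' that by simp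
  have sc0: "sC n (diagF n k) 1 (i, j') = ((i + (n - k + 1)) mod n, j')" if "\<not> d \<ge> 1"
    using sC_plus[OF assms(3,4) j' _ assms(2)] assms d' that by simp
  have cn: "CN n (diagF n k) R C (celld n i d) = sC n (diagF n k) 1 (i, j')"
    unfolding CN_def celld_def using sr assms j_def by simp
  show ?thesis
  proof (cases "d \<ge> 1")
    case True
    have "j' = ((i + 1) mod n - d) mod n" unfolding j'_def j_def s_def using True
      by (simp add: mod_simps algebra_simps)
    then show ?thesis using cn sc True unfolding celld_def by simp
  next
    case False
    have d0: "d = 0" using False assms by simp
    have "(i - d) mod n = i" using d0 assms by simp
    then have "j' = ((i + n - k + 1) mod n - d) mod n" unfolding j'_def j_def s_def using False d0
      by (simp add: mod_simps algebra_simps)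
    then show ?thesis using cn sc0 False unfolding celld_def by (simp add: algebra_simps)
  qed
qed

lemma CN_minus:
  assumes "3 \<le> k" "k < n" "0 \<le> i" "i < n" "0 \<le> d" "d < k" "R i = -1" "\<And>j. C j = 1"
  shows "CN n (diagF n k) R C (celld n i d) =
         celld n (if d + 2 = k then (i + n - k + 1) mod n else (i + 1) mod n) ((d + 2) mod k)"
proof -
  define j where "j = (i - d) mod n"
  have j: "0 \<le> j" "j < n" using assms unfolding j_def by auto
  have dij: "(i - j) mod n = d" unfolding j_def using assms by (intro diff_cell_mod) auto
  define s where "s = (if d + 1 < k then 1 else n - k + 1)"
  define j' where "j' = (j - s) mod n"
  have sr: "sR n (diagF n k) (-1) (i, j) = (i, j')"
    using sR_minus[OF assms(3,4) j _ assms(2)] assms dij unfolding j'_def s_def by simp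
  have j': "0 \<le> j'" "j' < n" using assms unfolding j'_def by auto
  have d': "(i - j') mod n = (if d + 1 < k then d + 1 else 0)"
  proof -
    have "(i - j') mod n = (i - j + s) mod n" unfolding j'_def by (simp add: mod_simps algebra_simps)
    also have "\<dots> = ((i - j) mod n + s) mod n" by (simp add: mod_simps)
    also have "\<dots> = (d + s) mod n" using dij by simp
    also have "\<dots> = (if d + 1 < k then d + 1 else 0)"
    proof (cases "d + 1 < k")
      case True then show ?thesis using assms unfolding s_def by simp
    next
      case False
      then have "d + s = n" using assms unfolding s_def by simp
      then show ?thesis using False assms by simp
    qed
    finally show ?thesis .
  qed
  have cn: "CN n (diagF n k) R C (celld n i d) = sC n (diagF n k) 1 (i, j')"
    unfolding CN_def celld_def using sr assms j_def by simp
  consider (a) "d + 2 < k" | (b) "d + 2 = k" | (c) "d + 1 = k" using assms by linarith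
  then show ?thesis
  proof cases
    case a
    have sc: "sC n (diagF n k) 1 (i, j') = ((i + 1) mod n, j')"
      using sC_plus[OF assms(3,4) j' _ assms(2)] assms d' a by simp
    have "j' = ((i + 1) mod n - (d + 2)) mod n" unfolding j'_def j_def s_def using a
      by (simp add: mod_simps algebra_simps)
    then show ?thesis using cn sc a assms unfolding celld_def by simp
  next
    case b
    have sc: "sC n (diagF n k) 1 (i, j') = ((i + (n - k + 1)) mod n, j')"
      using sC_plus[OF assms(3,4) j' _ assms(2)] assms d' b by simp
    have e: "(i - (1 + d)) mod n = (1 + (i + n) - k) mod n"
    proof -
      have "i - (1 + d) = (1 + (i + n) - k) - n" using b by simp
      then show ?thesis by (simp only: minus_mod_self2)
    qed
    have "j' = ((i + n - k + 1) mod n - 0) mod n" unfolding j'_def j_def s_def using b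
      by (simp add: mod_simps algebra_simps e)
    then show ?thesis using cn sc b assms unfolding celld_def by (simp add: algebra_simps)
  next
    case c
    have sc: "sC n (diagF n k) 1 (i, j') = ((i + 1) mod n, j')"
      using sC_plus[OF assms(3,4) j' _ assms(2)] assms d' c by simp
    have m: "(d + 2) mod k = 1"
    proof -
      have "d + 2 = 1 + k" using c by simp
      then have "(d + 2) mod k = (1 + k) mod k" by (simp only:)
      also have "\<dots> = 1" using assms by simp
      finally show ?thesis .
    qed
    have "j' = ((i - d) - (n - k + 1)) mod n" unfolding j'_def j_def s_def using c
      by (simp add: mod_diff_left_eq)
    also have "(i - d) - (n - k + 1) = i - n" using c by simp
    finally have "j' = ((i + 1) mod n - 1) mod n" by (simp add: mod_simps)
    then show ?thesis using cn sc c m assms unfolding celld_def by simp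
  qed
qed

locale L =
  fixes g m l :: int
  assumes g1: "g > 1" and m1: "m > 1" and l1: "l > 1"
    and og: "odd g" and om: "odd m" and el: "even l" and ml: "m > l"
    and gl: "gcd (g + 1) l = 2" and gm: "gcd m l = 1"
begin

definition "n = m * g"
definition "k = 1 + l * g"
definition "NN = l * g"
definition "c = m - l"
definition "h = g + 1"

lemma g3: "g \<ge> 3" using g1 og by presburger
lemma l2: "l \<ge> 2" using l1 by simp
lemma m3: "m \<ge> 3" using ml l2 om by presburger
lemma c1: "c \<ge> 1" unfolding c_def using ml by simp
lemma k_NN: "k = NN + 1" unfolding k_def NN_def by simp
lemma n_eq: "n = c * g + NN" unfolding n_def c_def NN_def by (simp add: algebra_simps)
lemma NN_ge: "NN \<ge> 2 * g" unfolding NN_def using l2 g3 by (simp add: mult_right_mono)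
lemma cg_ge: "c * g \<ge> g" using c1 g3 by (simp add: mult_right_mono)
lemma n_ge: "n \<ge> 3 * g" using n_eq NN_ge cg_ge by simp
lemma k_lt_n: "k < n" using n_eq k_NN cg_ge g3 by linarith
lemma k3: "k \<ge> 3" using k_NN NN_ge g3 by simp
lemma h_le: "h \<le> NN" using NN_ge g3 unfolding h_def by simp
lemma even_NN: "even NN" unfolding NN_def using el by simp
lemma even_h: "even h" unfolding h_def using og by simp

definition Tp :: "int \<times> int \<Rightarrow> int \<times> int" where
  "Tp x = (if fst x \<le> g then (if snd x = 1 then ((fst x + c * g) mod n, 0) else (fst x + 1, (snd x - 1) mod k))
     else (if snd x = 0 then ((fst x + c * g) mod n, 0) else ((fst x + 1) mod n, snd x)))"

definition reach :: "int \<times> int \<Rightarrow> int \<times> int \<Rightarrow> bool" where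
  "reach = (\<lambda>x y. y = Tp x)\<^sup>*\<^sup>*"

lemma reach_refl: "reach x x" unfolding reach_def by simp
lemma reach_step: "reach x (Tp x)" unfolding reach_def by (rule r_into_rtranclp) simp
lemma reach_trans: "reach x y \<Longrightarrow> reach y z \<Longrightarrow> reach x z" unfolding reach_def by simp
lemma reach_stepE: "y = Tp x \<Longrightarrow> reach x y" using reach_step by simp
lemma reach_step_trans: "reach x y \<Longrightarrow> z = Tp y \<Longrightarrow> reach x z"
  using reach_trans reach_step by blast
lemma reach_trans_step: "y = Tp x \<Longrightarrow> reach y z \<Longrightarrow> reach x z"
  using reach_trans reach_step by blast

lemma nohit:
  fixes a :: nat
  assumes "0 \<le> s" "s + int a \<le> g + 1" "v - int a \<ge> 1" "v < k"
  shows "reach (s, v) (s + int a, v - int a)"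
  using assms
proof (induction a)
  case 0 then show ?case by (simp add: reach_refl)
next
  case (Suc a)
  then have IH: "reach (s, v) (s + int a, v - int a)" by simp
  have "Tp (s + int a, v - int a) = (s + int (Suc a), v - int (Suc a))"
    using Suc.prems unfolding Tp_def by simp
  then show ?case using reach_step_trans[OF IH] by simp
qed

lemma run:
  fixes a :: nat
  assumes "g + 1 \<le> i" "i + int a \<le> n - 1" "v \<noteq> 0"
  shows "reach (i, v) (i + int a, v)"
  using assms
proof (induction a)
  case 0 then show ?case by (simp add: reach_refl)
next
  case (Suc a)
  then have IH: "reach (i, v) (i + int a, v)" by simp
  have "Tp (i + int a, v) = (i + int (Suc a), v)"
    using Suc.prems g1 unfolding Tp_def by (simp add: mod_pos_pos_trivial)
  then show ?case using reach_step_trans[OF IH] by simp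
qed

lemma wrap: "v \<noteq> 0 \<Longrightarrow> reach (n - 1, v) (0, v)"
  using n_ge g3 by (intro reach_stepE) (simp add: Tp_def)

lemma run_to0:
  assumes "g + 1 \<le> i" "i \<le> n - 1" "v \<noteq> 0"
  shows "reach (i, v) (0, v)"
proof -
  have "reach (i, v) (i + int (nat (n - 1 - i)), v)" using assms by (intro run) auto
  then show ?thesis using wrap[OF assms(3)] assms reach_trans by simp
qed

definition rowr :: "int \<Rightarrow> int \<Rightarrow> int" where
  "rowr r w = r + g * (w mod m)"

lemma rowr_shift:
  assumes "0 \<le> r" "r < g"
  shows "(rowr r w + c * g) mod n = rowr r (w + c)"
proof -
  define X where "X = w mod m + c"
  have e: "rowr r w + c * g = r + g * X" unfolding rowr_def X_def by (simp add: algebra_simps)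
  have "g * X = g * (m * (X div m) + X mod m)" by (simp only: mult_div_mod_eq)
  also have "\<dots> = g * (X mod m) + (X div m) * n"
  proof -
    have aux: "\<And>A B::int. g * (m * A + B) = g * B + A * (m * g)" by (simp add: algebra_simps)
    show ?thesis unfolding n_def by (rule aux)
  qed
  finally have "r + g * X = (r + g * (X mod m)) + (X div m) * n" by simp
  then have "(r + g * X) mod n = (r + g * (X mod m)) mod n" by (simp only: mod_mult_self1)
  also have "\<dots> = r + g * (X mod m)"
  proof (rule mod_pos_pos_trivial)
    have "X mod m \<ge> 0" using m1 by simp
    then show "0 \<le> r + g * (X mod m)" using assms g1 by simp
    have "X mod m \<le> m - 1" using m1 pos_mod_bound[of m X] by linarith
    then have "g * (X mod m) \<le> g * (m - 1)" using g1 by (simp add: mult_left_mono)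
    then show "r + g * (X mod m) < n" using assms unfolding n_def by (simp add: algebra_simps)
  qed
  also have "X mod m = (w + c) mod m" unfolding X_def by (simp add: mod_simps)
  finally have "(r + g * X) mod n = r + g * ((w + c) mod m)" .
  then show ?thesis using e unfolding rowr_def by (simp only:)
qed

lemma rowr_range:
  assumes "0 \<le> r" "r < g"
  shows "0 \<le> rowr r w" "rowr r w < n"
proof -
  have "w mod m \<ge> 0" using m1 by simp
  then show "0 \<le> rowr r w" using assms g1 unfolding rowr_def by simp
  have "w mod m \<le> m - 1" using m1 pos_mod_bound[of m w] by linarith
  then have "g * (w mod m) \<le> g * (m - 1)" using g1 by (simp add: mult_left_mono)
  then show "rowr r w < n" using assms unfolding n_def rowr_def by (simp add: algebra_simps)
qed

lemma tour:
  fixes j :: nat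
  assumes "0 \<le> r" "r < g" "1 \<le> j"
    and "\<And>j'::nat. 1 \<le> j' \<Longrightarrow> j' < j \<Longrightarrow> rowr r (w0 + int j' * c) > g"
  shows "reach (rowr r (w0 + c), 0) (rowr r (w0 + int j * c), 0)"
  using assms(3,4)
proof (induction j)
  case 0 then show ?case by simp
next
  case (Suc j)
  show ?case
  proof (cases "j = 0")
    case True then show ?thesis by (simp add: reach_refl)
  next
    case False
    then have IH: "reach (rowr r (w0 + c), 0) (rowr r (w0 + int j * c), 0)"
      using Suc by simp
    have gt: "rowr r (w0 + int j * c) > g" using Suc.prems(2)[of j] False by simp
    have "Tp (rowr r (w0 + int j * c), 0) = (rowr r (w0 + int j * c + c), 0)"
      using gt rowr_shift[OF assms(1,2)] unfolding Tp_def by simp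
    then show ?thesis using reach_step_trans[OF IH] by (simp add: algebra_simps)
  qed
qed

lemma jump_S:
  assumes "0 \<le> r" "r < g" "rowr r w \<le> g"
  shows "Tp (rowr r w, 1) = (rowr r (w + c), 0)"
  using assms rowr_shift[OF assms(1,2)] unfolding Tp_def by simp

end

lemma solve_lin:
  fixes a M y :: int
  assumes "gcd a M = 1" "M > 0"
  shows "\<exists>j. 0 \<le> j \<and> j < M \<and> (j * a) mod M = y mod M"
proof -
  obtain u v where uv: "u * a + v * M = 1" using bezout_int[of a M] assms by auto
  define j where "j = (y * u) mod M"
  have "(j * a) mod M = (y * u * a) mod M" unfolding j_def by (simp add: mod_simps)
  also have "y * u * a = y + (- y * v) * M"
  proof -
    have ua: "u * a = 1 - v * M" using uv by linarith
    have "y * u * a = y * (u * a)" by (simp add: mult.assoc)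
    also have "\<dots> = y * (1 - v * M)" using ua by simp
    also have "\<dots> = y + (- y * v) * M" by (simp add: algebra_simps)
    finally show ?thesis .
  qed
  also have "(y + (- y * v) * M) mod M = y mod M" by (rule mod_mult_self1)
  finally have E: "(j * a) mod M = y mod M" .
  have "0 \<le> j" "j < M" using assms unfolding j_def by auto
  with E show ?thesis by blast
qed

lemma cancel_lin:
  fixes a M j j' :: int
  assumes "gcd a M = 1" "(j * a) mod M = (j' * a) mod M"
  shows "j mod M = j' mod M"
proof -
  have "M dvd (j * a - j' * a)" using assms(2) by (simp add: mod_eq_dvd_iff)
  then have "M dvd (j - j') * a" by (simp add: algebra_simps)
  moreover have "coprime M a" using assms(1) by (simp add: coprime_iff_gcd_eq_1 gcd.commute)
  ultimately have "M dvd (j - j')" using coprime_dvd_mult_left_iff by blast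
  then show ?thesis by (simp add: mod_eq_dvd_iff)
qed

context L begin

lemma cop_cm: "gcd c m = 1"
proof -
  have "coprime m l" using gm by (simp add: coprime_iff_gcd_eq_1)
  have "coprime c m"
  proof (rule coprimeI)
    fix d assume "d dvd c" "d dvd m"
    then have "d dvd m - c" by (intro dvd_diff)
    then have "d dvd l" unfolding c_def by simp
    then show "is_unit d" using \<open>d dvd m\<close> \<open>coprime m l\<close> coprime_common_divisor by blast
  qed
  then show ?thesis by (simp add: coprime_iff_gcd_eq_1)
qed

definition "H2 = h div 2"
definition "N2 = NN div 2"
lemma h_H2: "h = 2 * H2" unfolding H2_def using even_h by simp
lemma NN_N2: "NN = 2 * N2" unfolding N2_def using even_NN by simp

lemma gcd_hNN: "gcd h NN = 2"
proof -
  have "coprime (g + 1) g"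
  proof (rule coprimeI)
    fix d assume "d dvd g + 1" "d dvd g"
    then have "d dvd (g + 1) - g" by (intro dvd_diff)
    then have "d dvd 1" by simp
    then show "is_unit d" by simp
  qed
  then have "gcd (g + 1) (l * g) = gcd (g + 1) l" by (rule gcd_mult_right_right_cancel)
  then show ?thesis unfolding h_def NN_def using gl by simp
qed

lemma cop_H2: "gcd H2 N2 = 1"
proof -
  have "gcd h NN = 2 * gcd H2 N2" unfolding h_H2 NN_N2 by (simp add: gcd_mult_left)
  then show ?thesis using gcd_hNN by simp
qed

lemma N2_pos: "N2 \<ge> g" using NN_ge NN_N2 by simp

definition rep :: "int \<Rightarrow> int" where "rep x = (x - 1) mod NN + 1"

lemma NN_pos: "NN > 0" using NN_ge g3 by simp

lemma rep_range: "1 \<le> rep x" "rep x \<le> NN"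
  unfolding rep_def using NN_pos pos_mod_bound[of NN "x - 1"] pos_mod_sign[of NN "x - 1"] by linarith+

lemma rep_id: "1 \<le> x \<Longrightarrow> x \<le> NN \<Longrightarrow> rep x = x"
  unfolding rep_def by (simp add: mod_pos_pos_trivial)

lemma rep_cong: "x mod NN = y mod NN \<Longrightarrow> rep x = rep y"
  unfolding rep_def using mod_diff_cong[of x NN y 1 1] by simp

lemma rep_mod: "rep x mod NN = x mod NN"
  unfolding rep_def by (simp add: mod_simps)

lemma rep_rep_shift: "rep (rep x - h) = rep (x - h)"
  by (rule rep_cong) (rule mod_diff_cong[OF rep_mod refl])

lemma rep_parity: "even (rep x) \<longleftrightarrow> even x"
proof -
  have "rep x mod NN = x mod NN" by (rule rep_mod)
  then have "(rep x mod NN) mod 2 = (x mod NN) mod 2" by simp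
  then show ?thesis using even_NN by (simp add: mod_mod_cancel even_iff_mod_2_eq_zero)
qed

end

context L begin

lemma m_pos: "m > 0" using m1 by simp

lemma j0_ex: "\<exists>j. 1 \<le> j \<and> j < m \<and> (j * c) mod m = 1"
proof -
  obtain j where j: "0 \<le> j" "j < m" "(j * c) mod m = 1 mod m"
    using solve_lin[OF cop_cm m_pos, of 1] by blast
  have "1 mod m = 1" using m1 by simp
  with j have "j \<noteq> 0" by auto
  with j \<open>1 mod m = 1\<close> show ?thesis by (intro exI[of _ j]) auto
qed

definition "j0 = (SOME j. 1 \<le> j \<and> j < m \<and> (j * c) mod m = 1)"
lemma j0: "1 \<le> j0" "j0 < m" "(j0 * c) mod m = 1"
  using someI_ex[OF j0_ex] unfolding j0_def by auto

lemma mul_inj: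
  assumes "0 \<le> j" "j < m" "0 \<le> j'" "j' < m" "(j * c) mod m = (j' * c) mod m"
  shows "j = j'"
  using cancel_lin[OF cop_cm assms(5)] assms by simp

lemma mul_nz:
  assumes "1 \<le> j" "j < m"
  shows "(j * c) mod m \<noteq> 0"
  using mul_inj[of j 0] assms by auto

lemma rowr_gt:
  assumes "0 \<le> r" "r < g" "r \<ge> 1 \<and> w mod m \<ge> 1 \<or> w mod m \<ge> 2"
  shows "rowr r w > g"
proof -
  have "w mod m \<ge> 0" using m1 by simp
  show ?thesis
  proof (cases "w mod m \<ge> 2")
    case True
    then have "g * (w mod m) \<ge> g * 2" using g1 by (intro mult_left_mono) auto
    then show ?thesis unfolding rowr_def using assms g1 by linarith
  next
    case False
    then have "r \<ge> 1" "w mod m \<ge> 1" using assms by auto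
    then have "g * (w mod m) \<ge> g * 1" using g1 by (intro mult_left_mono) auto
    then show ?thesis unfolding rowr_def using \<open>r \<ge> 1\<close> by linarith
  qed
qed

lemma tour_int:
  assumes "0 \<le> r" "r < g" "1 \<le> J"
    and "\<And>j'. 1 \<le> j' \<Longrightarrow> j' < J \<Longrightarrow> rowr r (w0 + j' * c) > g"
  shows "reach (rowr r (w0 + c), 0) (rowr r (w0 + J * c), 0)"
proof -
  have "reach (rowr r (w0 + c), 0) (rowr r (w0 + int (nat J) * c), 0)"
  proof (rule tour[OF assms(1,2)])
    show "1 \<le> nat J" using assms by simp
    fix j' :: nat assume "1 \<le> j'" "j' < nat J"
    then show "g < rowr r (w0 + int j' * c)" using assms(4)[of "int j'"] by simp
  qed
  then show ?thesis using assms by simp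
qed

lemma tour_r:
  assumes "1 \<le> r" "r < g" "1 \<le> J" "J \<le> m"
  shows "reach (rowr r c, 0) (rowr r (J * c), 0)"
proof -
  have "reach (rowr r (0 + c), 0) (rowr r (0 + J * c), 0)"
  proof (rule tour_int)
    fix j' assume "1 \<le> j'" "j' < J"
    then have "(j' * c) mod m \<noteq> 0" using mul_nz assms by simp
    moreover have "(j' * c) mod m \<ge> 0" using m1 by simp
    ultimately have "(j' * c) mod m \<ge> 1" by linarith
    then show "rowr r (0 + j' * c) > g" using assms by (intro rowr_gt) auto
  qed (use assms in auto)
  then show ?thesis by simp
qed

lemma tourA:
  assumes "1 \<le> J" "J \<le> j0"
  shows "reach (rowr 0 c, 0) (rowr 0 (J * c), 0)"
proof -
  have "reach (rowr 0 (0 + c), 0) (rowr 0 (0 + J * c), 0)"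
  proof (rule tour_int)
    fix j' assume a: "1 \<le> j'" "j' < J"
    then have "(j' * c) mod m \<noteq> 0" using mul_nz assms j0 by simp
    moreover have "(j' * c) mod m \<noteq> 1" using mul_inj[of j' j0] a assms j0 by auto
    moreover have "(j' * c) mod m \<ge> 0" using m1 by simp
    ultimately show "rowr 0 (0 + j' * c) > g" using g1 pos_mod_sign[OF m_pos, of "j' * c"] by (intro rowr_gt) auto
  qed (use assms g1 in auto)
  then show ?thesis by simp
qed

lemma tourB:
  assumes "1 \<le> J" "J \<le> m - j0"
  shows "reach (rowr 0 (1 + c), 0) (rowr 0 (1 + J * c), 0)"
proof (rule tour_int)
  fix j' assume a: "1 \<le> j'" "j' < J"
  have ne1: "(1 + j' * c) mod m \<noteq> 1"
  proof
    assume "(1 + j' * c) mod m = 1"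
    then have "(1 + j' * c) mod m = (1 + 0 * c) mod m" using m1 by simp
    then have "((1 + j' * c) - 1) mod m = ((1 + 0 * c) - 1) mod m" by (rule mod_diff_cong) simp
    then have "(j' * c) mod m = (0 * c) mod m" by simp
    then have "j' = 0" using mul_inj[of j' 0] a assms j0 by auto
    then show False using a by simp
  qed
  have ne0: "(1 + j' * c) mod m \<noteq> 0"
  proof
    assume h0: "(1 + j' * c) mod m = 0"
    have "((m - j0) * c + 1) mod m = (m * c - j0 * c + 1) mod m" by (simp add: algebra_simps)
    also have "\<dots> = ((j0 * c) mod m * (-1) + 1) mod m"
    proof -
      have "m * c - j0 * c + 1 = (- (j0 * c) + 1) + c * m" by (simp add: algebra_simps)
      then have "(m * c - j0 * c + 1) mod m = (- (j0 * c) + 1) mod m" by (simp only: mod_mult_self1)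
      then show ?thesis by (simp add: mod_simps)
    qed
    also have "\<dots> = 0" using j0 by simp
    finally have "((m - j0) * c + 1) mod m = (j' * c + 1) mod m" using h0 by (simp add: add.commute)
    then have "(((m - j0) * c + 1) - 1) mod m = ((j' * c + 1) - 1) mod m" by (rule mod_diff_cong) simp
    then have "((m - j0) * c) mod m = (j' * c) mod m" by simp
    then have "m - j0 = j'" using mul_inj[of "m - j0" j'] a assms j0 by auto
    then show False using a assms by simp
  qed
  have "(1 + j' * c) mod m \<ge> 0" using m1 by simp
  then show "rowr 0 (1 + j' * c) > g" using ne0 ne1 g1 pos_mod_sign[OF m_pos, of "1 + j' * c"] by (intro rowr_gt) auto
qed (use assms g1 in auto)

end

context L begin

lemma rowr0: "rowr r 0 = r" unfolding rowr_def by simp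
lemma rowr_mc: "rowr r (m * c) = r" unfolding rowr_def by simp
lemma rowr_j0: "rowr 0 (j0 * c) = g" unfolding rowr_def using j0 by simp
lemma rowr_1: "rowr 0 1 = g" unfolding rowr_def using m1 by simp
lemma rowr_B: "rowr 0 (1 + (m - j0) * c) = 0"
proof -
  have "1 + (m - j0) * c = (1 - j0 * c) + c * m" by (simp add: algebra_simps)
  then have "(1 + (m - j0) * c) mod m = (1 - j0 * c) mod m" by (simp only: mod_mult_self1)
  also have "\<dots> = (1 - (j0 * c) mod m) mod m" by (simp add: mod_simps)
  also have "\<dots> = 0" using j0 by simp
  finally show ?thesis unfolding rowr_def by simp
qed

lemma km1: "(-1) mod k = NN" using k_NN k3
  by (metis add_diff_cancel_right' minus_mod_self1 mod_pos_pos_trivial NN_pos less_add_one less_le)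

lemma Tp_diag_S: "0 \<le> r \<Longrightarrow> r \<le> g \<Longrightarrow> Tp (r, 0) = (r + 1, NN)"
  unfolding Tp_def using km1 by simp


lemma reach_nohit:
  assumes "0 \<le> s" "0 \<le> a" "s + a \<le> g + 1" "v - a \<ge> 1" "v < k"
  shows "reach (s, v) (s + a, v - a)"
  using nohit[of s "nat a" v] assms by simp

lemma gp1: "g + 1 \<le> n - 1" using n_ge g3 by simp

lemma pass_big:
  assumes "h + 1 \<le> u" "u \<le> NN"
  shows "reach (0, u) (0, u - h)"
proof -
  have "reach (0, u) (0 + h, u - h)" using assms k_NN g1 unfolding h_def by (intro reach_nohit) auto
  moreover have "reach (g + 1, u - h) (0, u - h)" using assms gp1 by (intro run_to0) auto
  ultimately show ?thesis unfolding h_def using reach_trans by simp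
qed

lemma pass_small:
  assumes "2 \<le> u" "u \<le> g"
  shows "reach (0, u) (0, u - h + NN)"
proof -
  define r where "r = u - 1"
  have r: "1 \<le> r" "r < g" using assms unfolding r_def by auto
  have 1: "reach (0, u) (r, 1)" using reach_nohit[of 0 "u - 1" u] assms k_NN NN_ge unfolding r_def by simp
  have 2: "Tp (r, 1) = (rowr r c, 0)" using jump_S[of r 0] r rowr0 by simp
  have 3: "reach (rowr r c, 0) (r, 0)" using tour_r[of r m] r m1 rowr_mc by simp
  have 4: "Tp (r, 0) = (u, NN)" using Tp_diag_S[of r] r unfolding r_def by simp
  have 5: "reach (u, NN) (g + 1, NN - (g + 1 - u))" using reach_nohit[of u "g + 1 - u" NN] assms k_NN NN_ge by simp
  have 6: "reach (g + 1, NN - (g + 1 - u)) (0, NN - (g + 1 - u))" using assms NN_ge gp1 by (intro run_to0) auto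
  have "reach (0, u) (0, NN - (g + 1 - u))"
    using reach_trans[OF 1 reach_trans_step[OF 2[symmetric] reach_trans[OF 3 reach_trans_step[OF 4[symmetric] reach_trans[OF 5 6]]]]] .
  then show ?thesis unfolding h_def by (simp add: algebra_simps)
qed

lemma pass_1: "reach (0, 1) (0, NN)"
proof -
  have 2: "Tp (0, 1) = (rowr 0 c, 0)" using jump_S[of 0 0] g1 rowr0 by simp
  have 3: "reach (rowr 0 c, 0) (g, 0)" using tourA[of j0] j0 rowr_j0 by simp
  have 4: "Tp (g, 0) = (g + 1, NN)" using Tp_diag_S[of g] g1 by simp
  have 6: "reach (g + 1, NN) (0, NN)" using NN_ge g3 gp1 by (intro run_to0) auto
  show ?thesis using reach_trans_step[OF 2[symmetric] reach_trans[OF 3 reach_trans_step[OF 4[symmetric] 6]]] .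
qed

lemma pass_h: "reach (0, h) (0, NN - g)"
proof -
  have 1: "reach (0, h) (g, 1)" using reach_nohit[of 0 g h] g1 k_NN h_le unfolding h_def by simp
  have 2: "Tp (g, 1) = (rowr 0 (1 + c), 0)" using jump_S[of 0 1] g1 rowr_1 by simp
  have 3: "reach (rowr 0 (1 + c), 0) (0, 0)" using tourB[of "m - j0"] j0 rowr_B by simp
  have 4: "Tp (0, 0) = (1, NN)" using Tp_diag_S[of 0] g1 by simp
  have 5: "reach (1, NN) (g + 1, NN - g)" using reach_nohit[of 1 g NN] g1 k_NN NN_ge by (simp add: add.commute)
  have 6: "reach (g + 1, NN - g) (0, NN - g)" using NN_ge g3 gp1 by (intro run_to0) auto
  show ?thesis
    using reach_trans[OF 1 reach_trans_step[OF 2[symmetric] reach_trans[OF 3 reach_trans_step[OF 4[symmetric] reach_trans[OF 5 6]]]]] .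
qed

lemma pass:
  assumes "1 \<le> u" "u \<le> NN" "u \<noteq> 1" "u \<noteq> h"
  shows "reach (0, u) (0, rep (u - h))"
proof (cases "u \<ge> h + 1")
  case True
  have "rep (u - h) = u - h" using True assms g1 unfolding h_def by (intro rep_id) auto
  then show ?thesis using pass_big[OF True assms(2)] by simp
next
  case False
  then have "2 \<le> u" "u \<le> g" using assms unfolding h_def by auto
  moreover have "rep (u - h) = u - h + NN"
    using rep_id[of "u - h + NN"] rep_cong[of "u - h + NN" "u - h"] \<open>u \<le> g\<close> NN_ge \<open>2 \<le> u\<close> unfolding h_def
    by simp
  ultimately show ?thesis using pass_small by simp
qed

end

context L begin

lemma N2_pos': "N2 > 0" using N2_pos g3 by simp
lemma H2_pos: "H2 > 0" using h_H2 g1 unfolding h_def by simp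

lemma div_contra:
  assumes "0 \<le> j" "j + 1 < N2"
  shows "\<not> NN dvd (j + 1) * h"
proof
  assume "NN dvd (j + 1) * h"
  then have "2 * N2 dvd 2 * ((j + 1) * H2)" unfolding NN_N2 h_H2 by (simp add: algebra_simps)
  then have "N2 dvd (j + 1) * H2" by (subst (asm) dvd_times_left_cancel_iff) auto
  moreover have "coprime N2 H2" using cop_H2 by (simp add: coprime_iff_gcd_eq_1 gcd.commute)
  ultimately have "N2 dvd j + 1" using coprime_dvd_mult_left_iff by blast
  then have "N2 \<le> j + 1" using assms by (intro zdvd_imp_le) auto
  then show False using assms by simp
qed

lemma rep_eq_contra:
  assumes "rep x = rep y" "x - y = NN - (j + 1) * h" "0 \<le> j" "j + 1 < N2"
  shows False
proof -
  have "x mod NN = y mod NN" using rep_mod[of x] rep_mod[of y] assms(1) by simp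
  then have "NN dvd x - y" by (simp add: mod_eq_dvd_iff)
  then have "NN dvd NN - (j + 1) * h" using assms(2) by simp
  then have "NN dvd NN - (NN - (j + 1) * h)" using dvd_diff[OF dvd_refl[of NN]] by blast
  then have "NN dvd (j + 1) * h" by simp
  then show False using div_contra assms by blast
qed

definition "Ech j = rep (NN - j * h)"
definition "Och j = rep (NN - g - j * h)"

lemma E_range: "1 \<le> Ech j" "Ech j \<le> NN" unfolding Ech_def using rep_range by auto
lemma O_range: "1 \<le> Och j" "Och j \<le> NN" unfolding Och_def using rep_range by auto

lemma E_even: "even (Ech j)" unfolding Ech_def using rep_parity even_NN even_h by simp
lemma O_odd: "odd (Och j)" unfolding Och_def using rep_parity even_NN even_h og by simp

lemma E_not_h: "0 \<le> j \<Longrightarrow> j + 1 < N2 \<Longrightarrow> Ech j \<noteq> h"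
proof
  assume a: "0 \<le> j" "j + 1 < N2" "Ech j = h"
  have "rep h = h" using h_le g1 unfolding h_def by (intro rep_id) auto
  then have "rep (NN - j * h) = rep h" using a unfolding Ech_def by simp
  then show False by (rule rep_eq_contra) (use a in \<open>auto simp: algebra_simps\<close>)
qed

lemma O_not_1: "0 \<le> j \<Longrightarrow> j + 1 < N2 \<Longrightarrow> Och j \<noteq> 1"
proof
  assume a: "0 \<le> j" "j + 1 < N2" "Och j = 1"
  have "rep 1 = 1" using NN_pos by (intro rep_id) auto
  then have "rep (NN - g - j * h) = rep 1" using a unfolding Och_def by simp
  then show False by (rule rep_eq_contra) (use a in \<open>auto simp: algebra_simps h_def\<close>)
qed

lemma E_step: "rep (Ech j - h) = Ech (j + 1)"
  unfolding Ech_def using rep_rep_shift by (simp add: algebra_simps)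
lemma O_step: "rep (Och j - h) = Och (j + 1)"
  unfolding Och_def using rep_rep_shift by (simp add: algebra_simps)

lemma E_last: "Ech (N2 - 1) = h"
proof -
  have "NN - (N2 - 1) * h = h + NN * (1 - H2)" unfolding h_H2 NN_N2 by (simp add: algebra_simps)
  then have "(NN - (N2 - 1) * h) mod NN = h mod NN" by simp
  then have "Ech (N2 - 1) = rep h" unfolding Ech_def by (rule rep_cong)
  also have "rep h = h" using h_le g1 unfolding h_def by (intro rep_id) auto
  finally show ?thesis .
qed

lemma chainE:
  fixes j :: nat
  shows "int j \<le> N2 - 1 \<Longrightarrow> reach (0, NN) (0, Ech (int j))"
proof (induction j)
  case 0
  have "Ech 0 = NN" unfolding Ech_def using NN_pos by (simp add: rep_id)
  then show ?case by (simp add: reach_refl)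
next
  case (Suc j)
  then have IH: "reach (0, NN) (0, Ech (int j))" by simp
  have "reach (0, Ech (int j)) (0, rep (Ech (int j) - h))"
    using E_range[of "int j"] E_even[of "int j"] E_not_h[of "int j"] Suc.prems by (intro pass) auto
  then show ?case using IH E_step[of "int j"] reach_trans by (simp add: add.commute)
qed

lemma reach_NNg: "reach (0, NN) (0, NN - g)"
proof -
  have "reach (0, NN) (0, Ech (int (nat (N2 - 1))))" using N2_pos' by (intro chainE) simp
  then have "reach (0, NN) (0, h)" using E_last N2_pos' by simp
  then show ?thesis using pass_h reach_trans by blast
qed

lemma chainO:
  fixes j :: nat
  shows "int j \<le> N2 - 1 \<Longrightarrow> reach (0, NN) (0, Och (int j))"
proof (induction j)
  case 0
  have "Och 0 = NN - g" unfolding Och_def using NN_ge g1 by (simp add: rep_id)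
  then show ?case using reach_NNg by simp
next
  case (Suc j)
  then have IH: "reach (0, NN) (0, Och (int j))" by simp
  have "Och (int j) \<noteq> h" using O_odd[of "int j"] even_h by auto
  then have "reach (0, Och (int j)) (0, rep (Och (int j) - h))"
    using O_range[of "int j"] O_not_1[of "int j"] Suc.prems by (intro pass) auto
  then show ?case using IH O_step[of "int j"] reach_trans by (simp add: add.commute)
qed

lemma double_mod:
  assumes "(j * H2) mod N2 = y mod N2"
  shows "(j * h) mod NN = (2 * y) mod NN"
proof -
  have "(2 * (j * H2)) mod (2 * N2) = 2 * ((j * H2) mod N2)" by (rule mod_mult_mult1)
  also have "\<dots> = 2 * (y mod N2)" using assms by simp
  also have "\<dots> = (2 * y) mod (2 * N2)" by (rule mod_mult_mult1[symmetric])
  finally show ?thesis unfolding h_H2 NN_N2 by (simp add: algebra_simps)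
qed

lemma row0_cover:
  assumes "1 \<le> u" "u \<le> NN"
  shows "reach (0, NN) (0, u)"
proof (cases "even u")
  case True
  define y where "y = (NN - u) div 2"
  have y2: "2 * y = NN - u" unfolding y_def using True even_NN by simp
  obtain j where j: "0 \<le> j" "j < N2" "(j * H2) mod N2 = y mod N2"
    using solve_lin[OF cop_H2 N2_pos', of y] by blast
  have "(j * h) mod NN = (NN - u) mod NN" using double_mod[OF j(3)] y2 by simp
  then have "(NN - j * h) mod NN = (NN - (NN - u)) mod NN" by (intro mod_diff_cong) auto
  then have "Ech j = rep u" unfolding Ech_def by (intro rep_cong) simp
  also have "\<dots> = u" using assms by (rule rep_id)
  finally have "Ech (int (nat j)) = u" using j by simp
  moreover have "reach (0, NN) (0, Ech (int (nat j)))" using j by (intro chainE) simp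
  ultimately show ?thesis by simp
next
  case False
  define y where "y = (NN - g - u) div 2"
  have y2: "2 * y = NN - g - u" unfolding y_def using False even_NN og by simp
  obtain j where j: "0 \<le> j" "j < N2" "(j * H2) mod N2 = y mod N2"
    using solve_lin[OF cop_H2 N2_pos', of y] by blast
  have "(j * h) mod NN = (NN - g - u) mod NN" using double_mod[OF j(3)] y2 by simp
  then have "((NN - g) - j * h) mod NN = ((NN - g) - (NN - g - u)) mod NN" by (intro mod_diff_cong) auto
  then have "Och j = rep u" unfolding Och_def by (intro rep_cong) simp
  also have "\<dots> = u" using assms by (rule rep_id)
  finally have "Och (int (nat j)) = u" using j by simp
  moreover have "reach (0, NN) (0, Och (int (nat j)))" using j by (intro chainO) simp
  ultimately show ?thesis by simp
qed

end

context L begin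

lemma rowr_eq: "x mod m = y mod m \<Longrightarrow> rowr r x = rowr r y"
  unfolding rowr_def by simp

lemma J_ex:
  "\<exists>J. 1 \<le> J \<and> J \<le> m \<and> (J * c) mod m = w mod m"
proof -
  obtain j where j: "0 \<le> j" "j < m" "(j * c) mod m = w mod m"
    using solve_lin[OF cop_cm m_pos, of w] by blast
  show ?thesis
  proof (cases "j = 0")
    case True
    then have "(m * c) mod m = w mod m" using j by simp
    then show ?thesis using m1 by (intro exI[of _ m]) auto
  next
    case False
    then show ?thesis using j by (intro exI[of _ j]) auto
  qed
qed

lemma i_rowr:
  assumes "0 \<le> i" "i < n"
  shows "i = rowr (i mod g) (i div g)"
proof -
  have "i div g < m"
  proof (rule ccontr)
    assume "\<not> i div g < m"
    then have "g * m \<le> g * (i div g)" using g1 by (intro mult_left_mono) auto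
    moreover have "g * (i div g) + i mod g = i" by (rule mult_div_mod_eq)
    moreover have "0 \<le> i mod g" using g1 by simp
    moreover have "i < g * m" using assms unfolding n_def by (simp add: mult.commute)
    ultimately show False by linarith
  qed
  moreover have "0 \<le> i div g" using assms g1 by (simp add: pos_imp_zdiv_nonneg_iff)
  ultimately have "(i div g) mod m = i div g" by (intro mod_pos_pos_trivial)
  then show ?thesis unfolding rowr_def by (simp add: mult_div_mod_eq)
qed

lemma diag_cover:
  assumes "0 \<le> i" "i < n"
  shows "reach (0, NN) (i, 0)"
proof -
  define r where "r = i mod g"
  define w where "w = i div g"
  have iw: "i = rowr r w" unfolding r_def w_def by (rule i_rowr[OF assms])
  have r: "0 \<le> r" "r < g" unfolding r_def using g1 by auto
  obtain J where J: "1 \<le> J" "J \<le> m" "(J * c) mod m = w mod m" using J_ex by blast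
  have rJ: "rowr r (J * c) = i" using iw rowr_eq[OF J(3)] by simp
  show ?thesis
  proof (cases "r \<ge> 1")
    case True
    have 0: "reach (0, NN) (0, r + 1)" using r True NN_ge by (intro row0_cover) auto
    have 1: "reach (0, r + 1) (r, 1)" using reach_nohit[of 0 r "r + 1"] r k_NN NN_ge by simp
    have 2: "Tp (r, 1) = (rowr r c, 0)" using jump_S[of r 0] r rowr0 by simp
    have 3: "reach (rowr r c, 0) (i, 0)" using tour_r[of r J] r True J rJ by simp
    show ?thesis using reach_trans[OF 0 reach_trans[OF 1 reach_trans_step[OF 2[symmetric] 3]]] .
  next
    case False
    then have r0: "r = 0" using r by simp
    show ?thesis
    proof (cases "J \<le> j0")
      case True
      have 0: "reach (0, NN) (0, 1)" using NN_pos by (intro row0_cover) auto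
      have 2: "Tp (0, 1) = (rowr 0 c, 0)" using jump_S[of 0 0] g1 rowr0 by simp
      have 3: "reach (rowr 0 c, 0) (i, 0)" using tourA[of J] True J rJ r0 by simp
      show ?thesis using reach_trans[OF 0 reach_trans_step[OF 2[symmetric] 3]] .
    next
      case False
      have 0: "reach (0, NN) (0, h)" using h_le g1 unfolding h_def by (intro row0_cover) auto
      have 1: "reach (0, h) (g, 1)" using reach_nohit[of 0 g h] g1 k_NN h_le unfolding h_def by simp
      have 2: "Tp (g, 1) = (rowr 0 (1 + c), 0)" using jump_S[of 0 1] g1 rowr_1 by simp
      have eq: "rowr 0 (1 + (J - j0) * c) = rowr 0 (J * c)"
      proof (rule rowr_eq)
        have A: "1 + (J - j0) * c = (1 - j0 * c) + J * c" by (simp add: algebra_simps)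
        have B: "(1 - j0 * c) mod m = 0"
        proof -
          have "(1 - j0 * c) mod m = (1 - (j0 * c) mod m) mod m" by (simp add: mod_diff_right_eq)
          then show ?thesis using j0 by simp
        qed
        have "(1 + (J - j0) * c) mod m = ((1 - j0 * c) + J * c) mod m" by (simp only: A)
        also have "\<dots> = ((1 - j0 * c) mod m + J * c) mod m" by (simp only: mod_add_left_eq)
        also have "\<dots> = (J * c) mod m" using B by simp
        finally show "(1 + (J - j0) * c) mod m = (J * c) mod m" .
      qed
      have 3: "reach (rowr 0 (1 + c), 0) (i, 0)" using tourB[of "J - j0"] False J rJ r0 eq by simp
      show ?thesis using reach_trans[OF 0 reach_trans[OF 1 reach_trans_step[OF 2[symmetric] 3]]] .
    qed
  qed
qed

lemma upper_cover:
  assumes "0 \<le> i" "i \<le> g + 1" "1 \<le> u" "u \<le> NN"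
  shows "reach (0, NN) (i, u)"
proof (cases "u + i \<le> NN")
  case True
  have 0: "reach (0, NN) (0, u + i)" using True assms by (intro row0_cover) auto
  have 1: "reach (0, u + i) (i, u)" using reach_nohit[of 0 i "u + i"] assms True k_NN by simp
  show ?thesis using reach_trans[OF 0 1] .
next
  case False
  define t where "t = i - NN + u"
  have t: "1 \<le> t" "t \<le> i" using False assms unfolding t_def by auto
  have 0: "reach (0, NN) (t - 1, 0)" using t assms n_ge g3 by (intro diag_cover) auto
  have 1: "Tp (t - 1, 0) = (t, NN)" using Tp_diag_S[of "t - 1"] t assms by simp
  have 2: "reach (t, NN) (i, u)" using reach_nohit[of t "i - t" NN] t assms k_NN unfolding t_def by simp
  show ?thesis using reach_trans[OF 0 reach_trans_step[OF 1[symmetric] 2]] .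
qed

lemma lower_cover:
  assumes "g + 1 \<le> i" "i \<le> n - 1" "1 \<le> u" "u \<le> NN"
  shows "reach (0, NN) (i, u)"
proof -
  have 0: "reach (0, NN) (g + 1, u)" using assms g1 by (intro upper_cover) auto
  have 1: "reach (g + 1, u) (g + 1 + int (nat (i - g - 1)), u)" using assms by (intro run) auto
  show ?thesis using reach_trans[OF 0 1] assms by simp
qed

lemma all_cover:
  assumes "0 \<le> i" "i < n" "0 \<le> u" "u < k"
  shows "reach (0, NN) (i, u)"
proof (cases "u = 0")
  case True then show ?thesis using diag_cover assms by simp
next
  case False
  then have "1 \<le> u" "u \<le> NN" using assms k_NN by auto
  show ?thesis
  proof (cases "i \<le> g + 1")
    case True then show ?thesis using upper_cover[of i u] assms \<open>1 \<le> u\<close> \<open>u \<le> NN\<close> by simp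
  next
    case False then show ?thesis using lower_cover[of i u] assms \<open>1 \<le> u\<close> \<open>u \<le> NN\<close> by simp
  qed
qed

end

lemma iter_in: "f ` A \<subseteq> A \<Longrightarrow> x \<in> A \<Longrightarrow> (f ^^ t) x \<in> A"
  by (induction t) auto

lemma iter_cancel:
  assumes "inj_on f A" "f ` A \<subseteq> A" "x \<in> A" "y \<in> A" "(f ^^ s) x = (f ^^ s) y"
  shows "x = y"
  using assms(5)
proof (induction s)
  case 0 then show ?case by simp
next
  case (Suc s)
  have "f ((f ^^ s) x) = f ((f ^^ s) y)" using Suc.prems by simp
  then have "(f ^^ s) x = (f ^^ s) y"
    using inj_onD[OF assms(1) _ iter_in[OF assms(2,3)] iter_in[OF assms(2,4)]] by blast
  then show ?case using Suc.IH by simp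
qed

lemma cycle_from_cover:
  assumes fin: "finite A" and into: "f ` A \<subseteq> A" and bA: "b \<in> A" and bim: "b \<in> f ` A"
    and cov: "\<forall>y\<in>A. \<exists>t. (f ^^ t) b = y"
  shows "single_cycle_on f A"
proof -
  have sur: "A \<subseteq> f ` A"
  proof
    fix y assume "y \<in> A"
    then obtain t where t: "(f ^^ t) b = y" using cov by blast
    show "y \<in> f ` A"
    proof (cases t)
      case 0 then show ?thesis using t bim by simp
    next
      case (Suc t')
      then have "y = f ((f ^^ t') b)" using t by simp
      then show ?thesis using iter_in[OF into bA] by blast
    qed
  qed
  then have im: "f ` A = A" using into by blast
  then have inj: "inj_on f A" using fin by (intro eq_card_imp_inj_on) auto
  have bij: "bij_betw f A A" using inj im by (simp add: bij_betw_def)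
  have "\<not> inj_on (\<lambda>t. (f ^^ t) b) {0..card A}"
  proof
    assume "inj_on (\<lambda>t. (f ^^ t) b) {0..card A}"
    then have "card ((\<lambda>t. (f ^^ t) b) ` {0..card A}) = card {0..card A}" by (rule card_image)
    moreover have "(\<lambda>t. (f ^^ t) b) ` {0..card A} \<subseteq> A" using iter_in[OF into bA] by blast
    then have "card ((\<lambda>t. (f ^^ t) b) ` {0..card A}) \<le> card A" by (rule card_mono[OF fin])
    ultimately show False by simp
  qed
  then obtain a1 a2 where aa: "a1 \<noteq> a2" "(f ^^ a1) b = (f ^^ a2) b"
    unfolding inj_on_def by blast
  obtain t1 t2 where tt: "t1 < t2" "(f ^^ t1) b = (f ^^ t2) b"
  proof (cases "a1 < a2")
    case True then show ?thesis using that[of a1 a2] aa by simp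
  next
    case False then have "a2 < a1" using aa by simp
    then show ?thesis using that[of a2 a1] aa by simp
  qed
  define P where "P = t2 - t1"
  have P0: "P > 0" unfolding P_def using tt by simp
  have "(f ^^ t1) ((f ^^ P) b) = (f ^^ (t1 + P)) b" by (simp only: funpow_add comp_apply)
  also have "t1 + P = t2" unfolding P_def using tt by simp
  finally have "(f ^^ t1) ((f ^^ P) b) = (f ^^ t2) b" .
  then have "(f ^^ t1) ((f ^^ P) b) = (f ^^ t1) b" using tt by simp
  then have perb: "(f ^^ P) b = b" using iter_cancel[OF inj into iter_in[OF into bA] bA] by blast
  have perm: "(f ^^ (P * j)) b = b" for j
  proof (induction j)
    case 0 then show ?case by simp
  next
    case (Suc j)
    have "P * Suc j = P + P * j" by simp
    then have "(f ^^ (P * Suc j)) b = (f ^^ P) ((f ^^ (P * j)) b)"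
      by (simp only: funpow_add comp_apply)
    then show ?case using Suc perb by simp
  qed
  have "\<exists>k. (f ^^ k) x = y" if xA: "x \<in> A" and yA: "y \<in> A" for x y
  proof -
    obtain p where p: "(f ^^ p) b = x" using bspec[OF cov xA] by (elim exE)
    obtain q where q: "(f ^^ q) b = y" using bspec[OF cov yA] by (elim exE)
    obtain P' where P': "P = Suc P'" using P0 gr0_implies_Suc by blast
    define kk where "kk = P' * p + q"
    have e1: "kk + p = q + P * p" unfolding kk_def P' by simp
    have "(f ^^ (kk + p)) b = (f ^^ kk) ((f ^^ p) b)" by (simp only: funpow_add comp_apply)
    then have A: "(f ^^ kk) x = (f ^^ (kk + p)) b" using p by simp
    have B: "(f ^^ (q + P * p)) b = (f ^^ q) ((f ^^ (P * p)) b)" by (simp only: funpow_add comp_apply)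
    have "(f ^^ kk) x = y" using A B e1 perm[of p] q by simp
    then show ?thesis by blast
  qed
  then show ?thesis unfolding single_cycle_on_def using bij by blast
qed

context L begin

definition "D u = (-2 * u) mod k"
definition "cellu x = celld n (fst x) (D (snd x))"
definition "Rf i = (if 0 \<le> i \<and> i \<le> g then -1 else (1::int))"
definition "Cf (j::int) = (1::int)"
definition "valid x \<longleftrightarrow> 0 \<le> fst x \<and> fst x < n \<and> 0 \<le> snd x \<and> snd x < k"

lemma k_pos: "k > 0" using k3 by simp
lemma odd_k: "odd k" unfolding k_def using el by simp

lemma D_range: "0 \<le> D u" "D u < k" unfolding D_def using k_pos by auto

lemma D_zero: assumes "0 \<le> u" "u < k" "D u = 0" shows "u = 0"
proof -
  have "k dvd 2 * u" using assms(3) unfolding D_def by (simp add: mod_eq_0_iff_dvd)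
  moreover have "coprime k 2" using odd_k by simp
  ultimately have "k dvd u" using coprime_dvd_mult_right_iff by blast
  then show ?thesis using assms zdvd_imp_le[of k u] by (cases "u = 0") auto
qed

lemma D_one: "D 1 = k - 2"
proof -
  have "-2 = (k - 2) - k" by simp
  then have "(-2) mod k = (k - 2) mod k" by (metis minus_mod_self2)
  also have "\<dots> = k - 2" using k3 by (intro mod_pos_pos_trivial) auto
  finally show ?thesis unfolding D_def by simp
qed

lemma D_km2: assumes "0 \<le> u" "u < k" "D u + 2 = k" shows "u = 1"
proof -
  have "(-2 * u) mod k = (-2 * 1) mod k" using assms(3) D_one unfolding D_def by simp
  then have "k dvd (-2 * u) - (-2 * 1)" by (simp add: mod_eq_dvd_iff)
  then have "k dvd 2 * (1 - u)" by (simp add: algebra_simps)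
  moreover have "coprime k 2" using odd_k by simp
  ultimately have "k dvd (1 - u)" using coprime_dvd_mult_right_iff by blast
  then obtain q where q: "1 - u = k * q" by (auto elim: dvdE)
  have "q = 0"
  proof (rule ccontr)
    assume "q \<noteq> 0"
    then have "q \<ge> 1 \<or> q \<le> -1" by auto
    then show False
    proof
      assume "q \<ge> 1" then have "k * q \<ge> k * 1" using k_pos by (intro mult_left_mono) auto
      then show False using q assms k3 by linarith
    next
      assume "q \<le> -1" then have "k * q \<le> k * (-1)" using k_pos by (intro mult_left_mono) auto
      then show False using q assms by linarith
    qed
  qed
  then show ?thesis using q by simp
qed

lemma D_pred: "D ((u - 1) mod k) = (D u + 2) mod k"
proof -
  have "(-2 * ((u - 1) mod k)) mod k = (-2 * (u - 1)) mod k" by (rule mod_mult_right_eq)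
  also have "-2 * (u - 1) = -2 * u + 2" by simp
  also have "(-2 * u + 2) mod k = ((-2 * u) mod k + 2) mod k" by (simp add: mod_add_left_eq)
  finally show ?thesis unfolding D_def .
qed

lemma nk1: "n - k + 1 = c * g" using n_eq k_NN by simp

lemma comm:
  assumes "valid x"
  shows "CN n (diagF n k) Rf Cf (cellu x) = cellu (Tp x)"
proof -
  obtain i u where x: "x = (i, u)" by (cases x)
  have v: "0 \<le> i" "i < n" "0 \<le> u" "u < k" using assms unfolding valid_def x by auto
  have C: "\<And>j. Cf j = 1" unfolding Cf_def by simp
  have e: "i + n - k + 1 = i + c * g" using nk1 by linarith
  show ?thesis
  proof (cases "i \<le> g")
    case True
    have R: "Rf i = -1" unfolding Rf_def using True v by simp
    have cn: "CN n (diagF n k) Rf Cf (cellu x) =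
      celld n (if D u + 2 = k then (i + c * g) mod n else (i + 1) mod n) ((D u + 2) mod k)"
      unfolding cellu_def x fst_conv snd_conv using CN_minus[of k n i "D u" Rf Cf, OF k3 k_lt_n v(1,2) D_range[of u] R C] unfolding e .
    show ?thesis
    proof (cases "u = 1")
      case True
      have "D u + 2 = k" using True D_one by simp
      moreover have "D 0 = 0" unfolding D_def by simp
      ultimately show ?thesis using cn True \<open>i \<le> g\<close> unfolding cellu_def x Tp_def
        by simp
    next
      case False
      have "D u + 2 \<noteq> k" using D_km2 v False by blast
      moreover have "(i + 1) mod n = i + 1" using v \<open>i \<le> g\<close> gp1 by (intro mod_pos_pos_trivial) auto
      ultimately show ?thesis using cn False \<open>i \<le> g\<close> D_pred unfolding cellu_def x Tp_def by simp
    qed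
  next
    case False
    have R: "Rf i = 1" unfolding Rf_def using False by simp
    have cn: "CN n (diagF n k) Rf Cf (cellu x) =
      celld n (if D u \<ge> 1 then (i + 1) mod n else (i + c * g) mod n) (D u)"
      unfolding cellu_def x fst_conv snd_conv using CN_plus[of k n i "D u" Rf Cf, OF k3 k_lt_n v(1,2) D_range[of u] R C] unfolding e .
    show ?thesis
    proof (cases "u = 0")
      case True
      have "D u = 0" unfolding D_def True by simp
      then show ?thesis using cn True False unfolding cellu_def x Tp_def by simp
    next
      case u: False
      have "D u \<noteq> 0" using D_zero v u by blast
      then have "D u \<ge> 1" using D_range[of u] by simp
      then show ?thesis using cn u False unfolding cellu_def x Tp_def by simp
    qed
  qed
qed

lemma Tp_valid: "valid x \<Longrightarrow> valid (Tp x)"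
proof -
  assume "valid x"
  have np: "n > 0" using n_ge g3 by simp
  show ?thesis unfolding valid_def Tp_def using \<open>valid x\<close> k_pos np gp1 unfolding valid_def
    by (auto simp: pos_mod_bound pos_mod_sign)
qed

lemma cellu_in: "valid x \<Longrightarrow> cellu x \<in> diagF n k"
  unfolding valid_def cellu_def celld_def diagF_def
  using diff_cell_mod[of "D (snd x)" n "fst x"] D_range[of "snd x"] k_lt_n by auto

lemma cellu_onto:
  assumes "y \<in> diagF n k"
  shows "\<exists>x. valid x \<and> cellu x = y"
proof -
  obtain i j where y: "y = (i, j)" by (cases y)
  have v: "0 \<le> i" "i < n" "0 \<le> j" "j < n" "(i - j) mod n < k" using assms unfolding y diagF_def by auto
  define d where "d = (i - j) mod n"
  define u where "u = (- d * ((k + 1) div 2)) mod k"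
  have "even (k + 1)" using odd_k by simp
  then have k2: "2 * ((k + 1) div 2) = k + 1" by (rule dvd_mult_div_cancel)
  have "D u = (-2 * (- d * ((k + 1) div 2))) mod k" unfolding D_def u_def by (rule mod_mult_right_eq)
  also have "-2 * (- d * ((k + 1) div 2)) = d * (2 * ((k + 1) div 2))" by (simp add: algebra_simps)
  also have "\<dots> = d + d * k" using k2 by (simp add: algebra_simps)
  also have "(d + d * k) mod k = d mod k" by simp
  also have "\<dots> = d" unfolding d_def using v by (intro mod_pos_pos_trivial) auto
  finally have Du: "D u = d" .
  have jj: "(i - d) mod n = j"
  proof -
    have "(i - d) mod n = (i - (i - j)) mod n" unfolding d_def by (simp add: mod_diff_right_eq)
    then show ?thesis using v by simp
  qed
  have "valid (i, u)" unfolding valid_def u_def using v k_pos by simp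
  moreover have "cellu (i, u) = y" unfolding cellu_def celld_def y using Du jj by simp
  ultimately show ?thesis by blast
qed

lemma reach_iter:
  assumes "reach x y" "valid x"
  shows "\<exists>t. (CN n (diagF n k) Rf Cf ^^ t) (cellu x) = cellu y \<and> valid y"
  using assms unfolding reach_def
proof (induction rule: rtranclp_induct)
  case base
  then show ?case by (intro exI[of _ 0]) simp
next
  case (step y z)
  then obtain t where t: "(CN n (diagF n k) Rf Cf ^^ t) (cellu x) = cellu y" "valid y" by blast
  have "(CN n (diagF n k) Rf Cf ^^ Suc t) (cellu x) = cellu z"
    using t comm[OF t(2)] step(2) by simp
  then show ?case using Tp_valid[OF t(2)] step(2) by blast
qed

lemma main: "is_solution (m * g) (diagF n k) Rf Cf"
proof -
  let ?f = "CN n (diagF n k) Rf Cf"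
  have sv: "sign_vector n Rf" "sign_vector n Cf" unfolding sign_vector_def Rf_def Cf_def by auto
  have fin: "finite (diagF n k)"
  proof (rule finite_subset)
    show "diagF n k \<subseteq> {0..<n} \<times> {0..<n}" unfolding diagF_def by auto
  qed simp
  have into: "?f ` diagF n k \<subseteq> diagF n k"
  proof
    fix z assume "z \<in> ?f ` diagF n k"
    then obtain y where y: "y \<in> diagF n k" "z = ?f y" by blast
    obtain x where x: "valid x" "cellu x = y" using cellu_onto[OF y(1)] by blast
    have "z = ?f (cellu x)" using y x by simp
    also have "\<dots> = cellu (Tp x)" by (rule comm[OF x(1)])
    finally have "z = cellu (Tp x)" .
    then show "z \<in> diagF n k" using cellu_in Tp_valid x by simp
  qed
  have vb: "valid (0, NN)" unfolding valid_def using n_ge g3 NN_pos k_NN by simp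
  have bA: "cellu (0, NN) \<in> diagF n k" using cellu_in[OF vb] .
  have vp: "valid (n - 1, NN)" unfolding valid_def using n_ge g3 NN_pos k_NN by simp
  have "Tp (n - 1, NN) = (0, NN)" unfolding Tp_def using gp1 NN_pos by simp
  then have "?f (cellu (n - 1, NN)) = cellu (0, NN)" using comm[OF vp] by simp
  then have bim: "cellu (0, NN) \<in> ?f ` diagF n k" using cellu_in[OF vp] by force
  have cov: "\<forall>y\<in>diagF n k. \<exists>t. (?f ^^ t) (cellu (0, NN)) = y"
  proof
    fix y assume "y \<in> diagF n k"
    then obtain x where x: "valid x" "cellu x = y" using cellu_onto by blast
    obtain i u where xi: "x = (i, u)" by (cases x)
    have "reach (0, NN) x" using x(1) unfolding xi valid_def by (intro all_cover) auto
    then show "\<exists>t. (?f ^^ t) (cellu (0, NN)) = y" using reach_iter[OF _ vb] x(2) by blast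
  qed
  have "single_cycle_on ?f (diagF n k)" by (rule cycle_from_cover[OF fin into bA bim cov])
  then show ?thesis unfolding is_solution_def using sv unfolding n_def by simp
qed

end

theorem corollary5p3:
  fixes g m l :: int and F :: "(int \<times> int) set"
  assumes "g > 1" "m > 1" "l > 1"
    and "odd g" "odd m" "even l" "m > l"
    and "gcd (g + 1) l = 2" "gcd m l = 1"
    and "cyclically_k_diagonal (m * g) (1 + l * g) F"
  shows "\<exists>R C. is_solution (m * g) F R C"
proof -
  interpret L g m l using assms by unfold_locales
  have "F = diagF n k" using assms(10) unfolding cyclically_k_diagonal_def diagF_def n_def k_def by simp
  then show ?thesis using main by blast
qed


end
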